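(* Let $\alpha\in(\tfrac12,1)$, $0<\eta_0\le\tfrac12$, $\eta_t=\eta_0t^{-\alpha}$. Then for every $t>0$, $$\mathbb E\|\Delta_t\|_2^2\le\frac{3\eta_0\,\mathrm{Tr}(\Gamma)}{(1-\gamma)\lambda_0}\,t^{-\alpha}+O(t^{-1}),$$ where the $O(t^{-1})$ term has a constant depending on problem parameters but not on $t$.
   Context: Setting: $\mathcal S$ is a finite state space, $\gamma\in[0,1)$ a discount factor, $P(\cdot\mid s)$ a Markov transition kernel on $\mathcal S$ (induced by a fixed policy) with unique stationary distribution $\mu$, and $r:\mathcal S\to[0,1]$ the expected reward. A feature map $\phi:\mathcal S\to\mathbb R^d$ satisfies $\|\phi(s)\|_2\le1$ for all $s$. Define $A=\mathbb E_{s\sim\mu,s'\sim P(\cdot\mid s)}[\phi(s)(\phi(s)-\gamma\phi(s'))^\top]$, $b=\mathbb E_{s\sim\mu}[\phi(s)r(s)]$, $\Sigma=\mathbb E_{s\sim\mu}[\phi(s)\phi(s)^\top]$, $\lambda_0=\lambda_{\min}(\Sigma)$ (assumed $>0$), $\theta^\star=A^{-1}b$. Samples: $(s_t,s_t',r_t)$, $t=1,2,\dots$, are i.i.d. with $s_t\sim\mu$, $s_t'\sim P(\cdot\mid s_t)$, $r_t\in[0,1]$ with $\mathbb E[r_t\mid s_t]=r(s_t)$; set $A_t=\phi(s_t)(\phi(s_t)-\gamma\phi(s_t'))^\top$, $b_t=r_t\phi(s_t)$. TD iterates: $\theta_0=0$, $\theta_t=\theta_{t-1}-\eta_t(A_t\theta_{t-1}-b_t)$;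 $\Delta_t=\theta_t-\theta^\star$. $\Gamma=\mathbb E[(A_t\theta^\star-b_t)(A_t\theta^\star-b_t)^\top]$. *)

theory Defs
  imports "HOL-Probability.Probability"
begin

definition outer :: "real^'d \<Rightarrow> real^'d \<Rightarrow> real^'d^'d" where
  "outer u v = (\<chi> i j. u $ i * v $ j)"

definition eigenvalues :: "real^'d^'d \<Rightarrow> real set" where
  "eigenvalues M = {l. \<exists>v. v \<noteq> 0 \<and> M *v v = l *\<^sub>R v}"

definition lambda_min :: "real^'d^'d \<Rightarrow> real" where
  "lambda_min M = Min (eigenvalues M)"

definition tdA :: "('s::finite \<Rightarrow> real) \<Rightarrow> ('s \<Rightarrow> 's \<Rightarrow> real) \<Rightarrow> real \<Rightarrow> ('s \<Rightarrow> real^'d) \<Rightarrow> real^'d^'d" where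
  "tdA mu P \<gamma> \<phi> = (\<Sum>s\<in>UNIV. \<Sum>s'\<in>UNIV. (mu s * P s s') *\<^sub>R outer (\<phi> s) (\<phi> s - \<gamma> *\<^sub>R \<phi> s'))"

definition tdb :: "('s::finite \<Rightarrow> real) \<Rightarrow> ('s \<Rightarrow> real) \<Rightarrow> ('s \<Rightarrow> real^'d) \<Rightarrow> real^'d" where
  "tdb mu r \<phi> = (\<Sum>s\<in>UNIV. (mu s * r s) *\<^sub>R \<phi> s)"

definition tdSigma :: "('s::finite \<Rightarrow> real) \<Rightarrow> ('s \<Rightarrow> real^'d) \<Rightarrow> real^'d^'d" where
  "tdSigma mu \<phi> = (\<Sum>s\<in>UNIV. mu s *\<^sub>R outer (\<phi> s) (\<phi> s))"

definition stationary :: "('s::finite \<Rightarrow> 's \<Rightarrow> real) \<Rightarrow> ('s \<Rightarrow> real) \<Rightarrow> bool" where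
  "stationary P mu \<longleftrightarrow> (\<forall>s. mu s \<ge> 0) \<and> (\<Sum>s\<in>UNIV. mu s) = 1 \<and>
      (\<forall>s'. (\<Sum>s\<in>UNIV. mu s * P s s') = mu s')"

definition sampleA :: "real \<Rightarrow> ('s \<Rightarrow> real^'d) \<Rightarrow> 's \<Rightarrow> 's \<Rightarrow> real^'d^'d" where
  "sampleA \<gamma> \<phi> s s' = outer (\<phi> s) (\<phi> s - \<gamma> *\<^sub>R \<phi> s')"

definition sampleb :: "('s \<Rightarrow> real^'d) \<Rightarrow> 's \<Rightarrow> real \<Rightarrow> real^'d" where
  "sampleb \<phi> s rr = rr *\<^sub>R \<phi> s"

text \<open>TD iterates: theta_0 = 0, theta_t = theta_{t-1} - eta_t (A_t theta_{t-1} - b_t).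
  S t, S' t, R t are the t-th sample (t = 1, 2, ...), eta the step-size sequence.\<close>
fun td_iter :: "(nat \<Rightarrow> real) \<Rightarrow> real \<Rightarrow> ('s \<Rightarrow> real^'d) \<Rightarrow> (nat \<Rightarrow> 'w \<Rightarrow> 's) \<Rightarrow> (nat \<Rightarrow> 'w \<Rightarrow> 's)
    \<Rightarrow> (nat \<Rightarrow> 'w \<Rightarrow> real) \<Rightarrow> nat \<Rightarrow> 'w \<Rightarrow> real^'d" where
  "td_iter eta \<gamma> \<phi> S S' R 0 \<omega> = 0"
| "td_iter eta \<gamma> \<phi> S S' R (Suc t) \<omega> =
     (let th = td_iter eta \<gamma> \<phi> S S' R t \<omega> in
      th - eta (Suc t) *\<^sub>R (sampleA \<gamma> \<phi> (S (Suc t) \<omega>) (S' (Suc t) \<omega>) *v th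
                            - sampleb \<phi> (S (Suc t) \<omega>) (R (Suc t) \<omega>)))"

end

theory Submission
  imports Defs "HOL-Real_Asymp.Real_Asymp"
begin


lemma seq_bound:
  fixes u :: "nat \<Rightarrow> real" and c G e0 \<alpha> :: real
  assumes a1: "1/2 < \<alpha>" and a2: "\<alpha> < 1" and cpos: "c > 0" and Gnn: "G \<ge> 0" and e0: "e0 > 0"
    and u_nn: "\<forall>n. u n \<ge> 0"
    and rec: "\<forall>n. u (Suc n) \<le> (1 - 2*c*(e0 * real (Suc n) powr (-\<alpha>)) + 8*(e0 * real (Suc n) powr (-\<alpha>))^2) * u n
                  + 2*G*(e0 * real (Suc n) powr (-\<alpha>))^2"
  shows "\<exists>D. \<forall>t::nat. t \<ge> 1 \<longrightarrow> u t \<le> 3*e0*G/c * real t powr (-\<alpha>) + D / real t"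
proof -
  define \<eta> where "\<eta> = (\<lambda>x::real. e0 * x powr (-\<alpha>))"
  have E1: "eventually (\<lambda>x::real. 1/(x+1) \<le> 2*c*(e0*(x+1) powr (-\<alpha>)) - 8*(e0*(x+1) powr (-\<alpha>))^2) at_top"
    using a1 a2 cpos e0 by real_asymp
  have E2: "eventually (\<lambda>x::real. 2*c*(e0*(x+1) powr (-\<alpha>)) \<le> 1) at_top"
    using a1 a2 cpos e0 by real_asymp
  have E3: "eventually (\<lambda>x::real. 24*(e0*x powr (-\<alpha>)) \<le> 2*c) at_top"
    using a1 a2 cpos e0 by real_asymp
  have E4: "eventually (\<lambda>x::real. 3*(e0*x powr (-\<alpha>) - e0*(x+1) powr (-\<alpha>)) \<le> 2*c*(e0*(x+1) powr (-\<alpha>))^2) at_top"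
    using a1 a2 cpos e0 by real_asymp
  have E5: "eventually (\<lambda>x::real. e0*(x+1) powr (-\<alpha>) \<le> e0*x powr (-\<alpha>)) at_top"
    using a1 a2 cpos e0 by real_asymp
  have "eventually (\<lambda>x::real. 1/(x+1) \<le> 2*c*(e0*(x+1) powr (-\<alpha>)) - 8*(e0*(x+1) powr (-\<alpha>))^2
     \<and> 2*c*(e0*(x+1) powr (-\<alpha>)) \<le> 1 \<and> 24*(e0*x powr (-\<alpha>)) \<le> 2*c
     \<and> 3*(e0*x powr (-\<alpha>) - e0*(x+1) powr (-\<alpha>)) \<le> 2*c*(e0*(x+1) powr (-\<alpha>))^2
     \<and> e0*(x+1) powr (-\<alpha>) \<le> e0*x powr (-\<alpha>)) at_top"
    using E1 E2 E3 E4 E5 by eventually_elim auto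
  then have "eventually (\<lambda>n. 1/(real n+1) \<le> 2*c*(e0*(real n+1) powr (-\<alpha>)) - 8*(e0*(real n+1) powr (-\<alpha>))^2
     \<and> 2*c*(e0*(real n+1) powr (-\<alpha>)) \<le> 1 \<and> 24*(e0*real n powr (-\<alpha>)) \<le> 2*c
     \<and> 3*(e0*real n powr (-\<alpha>) - e0*(real n+1) powr (-\<alpha>)) \<le> 2*c*(e0*(real n+1) powr (-\<alpha>))^2
     \<and> e0*(real n+1) powr (-\<alpha>) \<le> e0*real n powr (-\<alpha>)) sequentially"
    by (rule eventually_compose_filterlim[OF _ filterlim_real_sequentially])
  then obtain N0 where N0: "\<And>n. n \<ge> N0 \<Longrightarrow> 1/(real n+1) \<le> 2*c*(e0*(real n+1) powr (-\<alpha>)) - 8*(e0*(real n+1) powr (-\<alpha>))^2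
     \<and> 2*c*(e0*(real n+1) powr (-\<alpha>)) \<le> 1 \<and> 24*(e0*real n powr (-\<alpha>)) \<le> 2*c
     \<and> 3*(e0*real n powr (-\<alpha>) - e0*(real n+1) powr (-\<alpha>)) \<le> 2*c*(e0*(real n+1) powr (-\<alpha>))^2
     \<and> e0*(real n+1) powr (-\<alpha>) \<le> e0*real n powr (-\<alpha>)"
    unfolding eventually_sequentially by blast
  define N where "N = max N0 1"
  define D where "D = (\<Sum>k\<le>N. real k * u k)"
  define B where "B = 3*G/c"
  have Bnn: "B \<ge> 0" using Gnn cpos by (simp add: B_def)
  have small: "u t \<le> B * \<eta> (real t) + D / real t" if "1 \<le> t" "t \<le> N" for t
  proof -
    have "real t * u t \<le> D" unfolding D_def
      using that u_nn by (intro member_le_sum) auto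
    then have "u t \<le> D / real t" using that by (simp add: field_simps)
    moreover have "B * \<eta> (real t) \<ge> 0" using Bnn e0 by (simp add: \<eta>_def)
    ultimately show ?thesis by linarith
  qed
  have big: "u n \<le> B * \<eta> (real n) + D / real n" if "n \<ge> N" for n
    using that
  proof (induction n rule: dec_induct)
    case base
    then show ?case using small[of N] by (simp add: N_def)
  next
    case (step n)
    have nN0: "n \<ge> N0" and n1: "n \<ge> 1" using step.hyps by (auto simp: N_def)
    note C = N0[OF nN0]
    define h where "h = \<eta> (real n)"
    define h' where "h' = \<eta> (real n + 1)"
    define a where "a = 2*c*h' - 8*h'^2"
    have h'pos: "h' \<ge> 0" using e0 by (simp add: h'_def \<eta>_def)
    have c1: "1/(real n+1) \<le> a" using C by (simp add: a_def h'_def \<eta>_def)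
    have c2: "2*c*h' \<le> 1" using C by (simp add: h'_def \<eta>_def)
    have c3: "24*h \<le> 2*c" using C by (simp add: h_def \<eta>_def)
    have c4: "3*(h - h') \<le> 2*c*h'^2" using C by (simp add: h'_def h_def \<eta>_def)
    have c5: "h' \<le> h" using C by (simp add: h'_def h_def \<eta>_def)
    have Dnn: "D \<ge> 0" unfolding D_def using u_nn by (intro sum_nonneg) auto
    have a1': "1 - a \<ge> 0" using c2 h'pos by (simp add: a_def) (smt (verit) zero_le_power2)
    have r: "u (Suc n) \<le> (1 - a) * u n + 2*G*h'^2"
      using rec[rule_format, of n] by (simp add: a_def h'_def \<eta>_def add.commute algebra_simps)
    also have "\<dots> \<le> (1 - a) * (B*h + D / real n) + 2*G*h'^2"
      using step.IH a1' by (intro add_right_mono mult_left_mono) (auto simp: h_def)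
    also have "\<dots> = ((1-a)*B*h + 2*G*h'^2) + (1-a) * D / real n" by (simp add: algebra_simps)
    also have "\<dots> \<le> B*h' + D/(real n + 1)"
    proof (rule add_mono)
      have "(1-a) \<le> real n / (real n + 1)" using c1 n1 by (simp add: field_simps)
      then have "(1-a) * D \<le> real n / (real n + 1) * D" using Dnn by (rule mult_right_mono)
      then show "(1 - a) * D / real n \<le> D / (real n + 1)" using n1 by (simp add: field_simps)
    next
      have "6*c*h'*h \<ge> 6*c*h'*h'" using c5 cpos h'pos by (simp add: mult_left_mono)
      moreover have "24*h'^2*h \<le> 2*c*h'^2" using c3 h'pos
        by (metis mult.assoc mult.commute mult_right_mono zero_le_power2)
      ultimately have "3*(h-h') + 2*c*h'^2 \<le> 3*a*h"
        using c4 by (simp add: a_def algebra_simps power2_eq_square)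
      then have "G*(3*(h-h') + 2*c*h'^2) \<le> G*(3*a*h)" using Gnn by (rule mult_left_mono)
      moreover have "c*((1-a)*B*h + 2*G*h'^2) = G*(3*h - 3*a*h) + G*(2*c*h'^2)"
        using cpos by (simp add: B_def field_simps)
      moreover have "c*(B*h') = G*(3*h')" using cpos by (simp add: B_def field_simps)
      moreover have "G*(3*h - 3*a*h) + G*(2*c*h'^2) - G*(3*h') = G*(3*(h-h') + 2*c*h'^2) - G*(3*a*h)"
        by (simp add: algebra_simps)
      ultimately have "c*((1-a)*B*h + 2*G*h'^2) \<le> c*(B*h')"
        by linarith
      then show "(1-a)*B*h + 2*G*h'^2 \<le> B*h'" using cpos by simp
    qed
    finally show ?case by (simp add: h'_def add.commute)
  qed
  show ?thesis
  proof (intro exI allI impI)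
    fix t :: nat assume "t \<ge> 1"
    then have "u t \<le> B * \<eta> (real t) + D / real t"
      using small big by (cases "t \<le> N") auto
    then show "u t \<le> 3*e0*G/c * real t powr (-\<alpha>) + D / real t"
      by (simp add: B_def \<eta>_def mult_ac)
  qed
qed


lemma outer_mv: "outer u v *v x = (v \<bullet> x) *\<^sub>R u"
  by (simp add: vec_eq_iff outer_def matrix_vector_mult_def inner_vec_def sum_distrib_left mult_ac)

lemma sum_mv: "finite S \<Longrightarrow> (sum f S) *v x = (\<Sum>s\<in>S. f s *v x)" for x :: "real^'n"
  by (induction S rule: finite_induct) (auto simp: matrix_vector_mult_add_rdistrib)

lemma scaleR_mv: "(c *\<^sub>R M) *v x = c *\<^sub>R (M *v x)" for M :: "real^'n^'m"
  by (metis scaleR_matrix_vector_assoc)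

lemma Sigma_mv: "tdSigma mu \<phi> *v x = (\<Sum>s\<in>UNIV. (mu s * (\<phi> s \<bullet> x)) *\<^sub>R \<phi> s)"
  by (simp add: tdSigma_def sum_mv scaleR_mv outer_mv)

lemma Sigma_form: "y \<bullet> (tdSigma mu \<phi> *v x) = (\<Sum>s\<in>UNIV. mu s * (\<phi> s \<bullet> x) * (\<phi> s \<bullet> y))"
  by (simp add: Sigma_mv inner_sum_right inner_commute mult_ac)

lemma A_mv: "tdA mu P \<gamma> \<phi> *v x = (\<Sum>s\<in>UNIV. \<Sum>s'\<in>UNIV. (mu s * P s s' * ((\<phi> s - \<gamma> *\<^sub>R \<phi> s') \<bullet> x)) *\<^sub>R \<phi> s)"
  by (simp add: tdA_def sum_mv scaleR_mv outer_mv)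

lemma A_form: "y \<bullet> (tdA mu P \<gamma> \<phi> *v x) = (\<Sum>s\<in>UNIV. \<Sum>s'\<in>UNIV. mu s * P s s' * ((\<phi> s - \<gamma> *\<^sub>R \<phi> s') \<bullet> x) * (\<phi> s \<bullet> y))"
  by (simp add: A_mv inner_sum_right inner_commute mult_ac)

lemma A_ge_Sigma:
  fixes P :: "'s::finite \<Rightarrow> 's \<Rightarrow> real"
  assumes g: "0 \<le> \<gamma>" and Pnn: "\<forall>s s'. 0 \<le> P s s'" and Psum: "\<forall>s. (\<Sum>s'\<in>UNIV. P s s') = 1"
    and st: "stationary P mu"
  shows "(1 - \<gamma>) * (x \<bullet> (tdSigma mu \<phi> *v x)) \<le> x \<bullet> (tdA mu P \<gamma> \<phi> *v x)"
proof -
  define a where "a = (\<lambda>s. \<phi> s \<bullet> x)"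
  have mnn: "\<forall>s. mu s \<ge> 0" and mst: "\<forall>s'. (\<Sum>s\<in>UNIV. mu s * P s s') = mu s'"
    using st by (auto simp: stationary_def)
  define q where "q = (\<Sum>s\<in>UNIV. mu s * (a s)^2)"
  have q: "x \<bullet> (tdSigma mu \<phi> *v x) = q"
    by (simp add: Sigma_form q_def a_def power2_eq_square mult_ac)
  have Aexp: "x \<bullet> (tdA mu P \<gamma> \<phi> *v x) = (\<Sum>s\<in>UNIV. \<Sum>s'\<in>UNIV. mu s * P s s' * (a s)^2)
     - \<gamma> * (\<Sum>s\<in>UNIV. \<Sum>s'\<in>UNIV. mu s * P s s' * (a s * a s'))"
    by (simp add: A_form a_def inner_diff_left sum_subtractf sum_distrib_left algebra_simps power2_eq_square)
  have t1: "(\<Sum>s\<in>UNIV. \<Sum>s'\<in>UNIV. mu s * P s s' * (a s)^2) = q"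
    unfolding q_def
  proof (rule sum.cong[OF refl])
    fix s
    have "(\<Sum>s'\<in>UNIV. mu s * P s s' * (a s)^2) = mu s * (a s)^2 * (\<Sum>s'\<in>UNIV. P s s')"
      by (simp add: sum_distrib_left sum_distrib_right mult_ac)
    then show "(\<Sum>s'\<in>UNIV. mu s * P s s' * (a s)^2) = mu s * (a s)^2" using Psum by simp
  qed
  have t2: "(\<Sum>s\<in>UNIV. \<Sum>s'\<in>UNIV. mu s * P s s' * (a s')^2) = q"
  proof -
    have "(\<Sum>s\<in>UNIV. \<Sum>s'\<in>UNIV. mu s * P s s' * (a s')^2) = (\<Sum>s'\<in>UNIV. \<Sum>s\<in>UNIV. mu s * P s s' * (a s')^2)"
      by (rule sum.swap)
    also have "\<dots> = (\<Sum>s'\<in>UNIV. (a s')^2 * (\<Sum>s\<in>UNIV. mu s * P s s'))"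
      by (simp add: sum_distrib_left mult_ac)
    also have "\<dots> = q" using mst by (simp add: q_def mult_ac)
    finally show ?thesis .
  qed
  have cross: "(\<Sum>s\<in>UNIV. \<Sum>s'\<in>UNIV. mu s * P s s' * (a s * a s')) \<le> q"
  proof -
    have "(\<Sum>s\<in>UNIV. \<Sum>s'\<in>UNIV. mu s * P s s' * (a s * a s'))
        \<le> (\<Sum>s\<in>UNIV. \<Sum>s'\<in>UNIV. mu s * P s s' * (((a s)^2 + (a s')^2)/2))"
    proof (intro sum_mono mult_left_mono)
      fix s s'
      show "a s * a s' \<le> ((a s)^2 + (a s')^2)/2"
        using sum_squares_bound[of "a s" "a s'"] by (simp add: power2_eq_square)
      show "0 \<le> mu s * P s s'" using mnn Pnn by simp
    qed
    also have "\<dots> = ((\<Sum>s\<in>UNIV. \<Sum>s'\<in>UNIV. mu s * P s s' * (a s)^2) + (\<Sum>s\<in>UNIV. \<Sum>s'\<in>UNIV. mu s * P s s' * (a s')^2)) / 2"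
      by (simp add: sum_divide_distrib sum.distrib[symmetric] algebra_simps add_divide_distrib)
    also have "\<dots> = q" using t1 t2 by simp
    finally show ?thesis .
  qed
  have "\<gamma> * (\<Sum>s\<in>UNIV. \<Sum>s'\<in>UNIV. mu s * P s s' * (a s * a s')) \<le> \<gamma> * q"
    using cross g by (rule mult_left_mono)
  then show ?thesis using Aexp t1 q by (simp add: left_diff_distrib)
qed


lemma eig_finite:
  fixes M :: "real^'d^'d"
  assumes sym: "\<And>x y. x \<bullet> (M *v y) = y \<bullet> (M *v x)"
  shows "finite (eigenvalues M)"
proof -
  define E where "E = eigenvalues M"
  define f where "f = (\<lambda>l. SOME v. v \<noteq> 0 \<and> M *v v = l *\<^sub>R v)"
  have fE: "f l \<noteq> 0 \<and> M *v f l = l *\<^sub>R f l" if "l \<in> E" for l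
  proof -
    from that obtain v where "v \<noteq> 0 \<and> M *v v = l *\<^sub>R v" unfolding E_def eigenvalues_def by blast
    then show ?thesis unfolding f_def by (rule someI)
  qed
  have inj: "inj_on f E"
  proof (rule inj_onI)
    fix l1 l2 assume "l1 \<in> E" "l2 \<in> E" "f l1 = f l2"
    then have "l1 *\<^sub>R f l1 = l2 *\<^sub>R f l1" "f l1 \<noteq> 0" using fE by metis+
    then show "l1 = l2" by (simp add: scaleR_cancel_right)
  qed
  have orth: "pairwise orthogonal (f ` E)"
    unfolding pairwise_def
  proof (intro ballI impI)
    fix v w assume "v \<in> f ` E" "w \<in> f ` E" "v \<noteq> w"
    then obtain l1 l2 where l: "l1 \<in> E" "l2 \<in> E" "v = f l1" "w = f l2" "l1 \<noteq> l2" by auto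
    have "l1 * (w \<bullet> v) = w \<bullet> (M *v v)" using fE[OF l(1)] l by simp
    also have "\<dots> = v \<bullet> (M *v w)" by (rule sym)
    also have "\<dots> = l2 * (v \<bullet> w)" using fE[OF l(2)] l by simp
    finally have "(l1 - l2) * (v \<bullet> w) = 0" by (simp add: inner_commute algebra_simps)
    then show "orthogonal v w" using l(5) by (simp add: orthogonal_def)
  qed
  have "0 \<notin> f ` E" using fE by auto
  then have "independent (f ` E)" using orth by (rule pairwise_orthogonal_independent[rotated])
  then have "finite (f ` E)" using independent_bound by blast
  then show ?thesis using inj finite_imageD E_def by blast
qed

lemma min_eig_le:
  fixes M :: "real^'d^'d"
  assumes sym: "\<And>x y. x \<bullet> (M *v y) = y \<bullet> (M *v x)"
  shows "lambda_min M * (norm x)^2 \<le> x \<bullet> (M *v x)"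
proof -
  define q where "q = (\<lambda>x. x \<bullet> (M *v x))"
  have cont: "continuous_on (sphere 0 1) q"
    unfolding q_def by (intro continuous_intros matrix_vector_mult_linear_continuous_on)
  obtain x0 where x0: "x0 \<in> sphere 0 1" and min: "\<forall>y\<in>sphere 0 1. q x0 \<le> q y"
    using continuous_attains_inf[OF compact_sphere _ cont] by (auto simp: sphere_eq_empty)
  define m where "m = q x0"
  have nx0: "norm x0 = 1" using x0 by simp
  have qscale: "q (c *\<^sub>R y) = c^2 * q y" for c y
    by (simp add: q_def matrix_vector_mult_scaleR power2_eq_square)
  have ge: "m * (norm y)^2 \<le> q y" for y
  proof (cases "y = 0")
    case True then show ?thesis by (simp add: q_def)
  next
    case False
    then have "(1/norm y) *\<^sub>R y \<in> sphere 0 1" by simp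
    then have "m \<le> q ((1/norm y) *\<^sub>R y)" using min m_def by blast
    also have "\<dots> = q y / (norm y)^2" by (simp add: qscale power2_eq_square)
    finally show ?thesis using False by (simp add: field_simps)
  qed
  define v where "v = M *v x0 - m *\<^sub>R x0"
  define p where "p = v \<bullet> v"
  define Q where "Q = q v - m * (norm v)^2"
  have Qnn: "Q \<ge> 0" using ge[of v] by (simp add: Q_def)
  have quad: "0 \<le> 2 * t * p + t^2 * Q" for t
  proof -
    have "m * (norm (x0 + t *\<^sub>R v))^2 \<le> q (x0 + t *\<^sub>R v)" by (rule ge)
    moreover have "(norm (x0 + t *\<^sub>R v))^2 = 1 + 2 * t * (v \<bullet> x0) + t^2 * (v \<bullet> v)"
    proof -
      have "x0 \<bullet> x0 = 1" using nx0 by (simp add: inner_commute norm_eq_sqrt_inner)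
      then show ?thesis
        by (simp only: power2_norm_eq_inner) (simp add: inner_add_left inner_add_right inner_commute power2_eq_square algebra_simps)
    qed
    moreover have "q (x0 + t *\<^sub>R v) = q x0 + 2 * t * (v \<bullet> (M *v x0)) + t^2 * q v"
    proof -
      have "x0 \<bullet> (M *v v) = v \<bullet> (M *v x0)" by (rule sym)
      then show ?thesis
        by (simp add: q_def matrix_vector_right_distrib matrix_vector_mult_scaleR inner_add_left inner_add_right
            power2_eq_square algebra_simps)
    qed
    moreover have "v \<bullet> (M *v x0) = p + m * (v \<bullet> x0)"
      by (simp add: p_def v_def inner_diff_right)
    moreover have "(norm v)^2 = v \<bullet> v" by (simp add: power2_norm_eq_inner)
    ultimately show ?thesis by (simp add: Q_def p_def m_def algebra_simps)
  qed
  have "p = 0"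
  proof -
    define t where "t = - p / (Q+1)"
    have tQ: "t * (Q+1) = - p" using Qnn by (simp add: t_def)
    have "0 \<le> 2 * t * p + t^2 * Q" by (rule quad)
    then have "0 \<le> (2 * t * p + t^2 * Q) * (Q+1)^2"
      using Qnn by simp
    also have "\<dots> = 2 * (t * (Q+1)) * p * (Q+1) + (t*(Q+1))^2 * Q"
      by (simp add: power2_eq_square algebra_simps)
    also have "\<dots> = -(p^2 * (Q + 2))" unfolding tQ by (simp add: power2_eq_square algebra_simps)
    finally have "p^2 * (Q+2) \<le> 0" by simp
    moreover have "p^2 * (Q+2) \<ge> 0" using Qnn by simp
    ultimately have "p^2 * (Q+2) = 0" by linarith
    then show ?thesis using Qnn by simp
  qed
  then have "v = 0" by (simp add: p_def)
  then have "M *v x0 = m *\<^sub>R x0" by (simp add: v_def)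
  moreover have "x0 \<noteq> 0" using nx0 by auto
  ultimately have meig: "m \<in> eigenvalues M" unfolding eigenvalues_def by blast
  have "lambda_min M \<le> m" unfolding lambda_min_def using meig eig_finite[OF sym] by (rule Min_le[rotated])
  then have "lambda_min M * (norm x)^2 \<le> m * (norm x)^2" by (simp add: mult_right_mono)
  also have "\<dots> \<le> q x" by (rule ge)
  finally show ?thesis by (simp add: q_def)
qed


lemma (in prob_space) indep_expect:
  fixes X Y :: "'a \<Rightarrow> 'b" and f :: "'b \<Rightarrow> 'b \<Rightarrow> real" and MX MY :: "'b measure"
  assumes ind: "indep_var MX X MY Y"
    and fm: "(\<lambda>(x,y). f x y) \<in> borel_measurable (MX \<Otimes>\<^sub>M MY)"
    and int: "integrable M (\<lambda>\<omega>. f (X \<omega>) (Y \<omega>))"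
    and h: "\<And>x. x \<in> space MX \<Longrightarrow> (\<integral>\<omega>. f x (Y \<omega>) \<partial>M) = h x"
  shows "(\<integral>\<omega>. f (X \<omega>) (Y \<omega>) \<partial>M) = (\<integral>\<omega>. h (X \<omega>) \<partial>M)"
proof -
  have rvX[measurable]: "X \<in> measurable M MX" and rvY[measurable]: "Y \<in> measurable M MY"
    and prod: "distr M MX X \<Otimes>\<^sub>M distr M MY Y = distr M (MX \<Otimes>\<^sub>M MY) (\<lambda>\<omega>. (X \<omega>, Y \<omega>))"
    using ind unfolding indep_var_distribution_eq by auto
  have psX: "prob_space (distr M MX X)" by (rule prob_space_distr) simp
  have psY: "prob_space (distr M MY Y)" by (rule prob_space_distr) simp
  interpret PXY: pair_sigma_finite "distr M MX X" "distr M MY Y"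
    using psX psY by (intro pair_sigma_finite.intro prob_space_imp_sigma_finite)
  have DYsf: "sigma_finite_measure (distr M MY Y)" using psY by (rule prob_space_imp_sigma_finite)
  have jm: "(\<lambda>\<omega>. (X \<omega>, Y \<omega>)) \<in> measurable M (MX \<Otimes>\<^sub>M MY)" by measurable
  have int2: "integrable (distr M MX X \<Otimes>\<^sub>M distr M MY Y) (\<lambda>(x,y). f x y)"
    unfolding prod using int by (subst integrable_distr_eq[OF jm fm]) simp
  have "(\<integral>\<omega>. f (X \<omega>) (Y \<omega>) \<partial>M) = integral\<^sup>L (distr M (MX \<Otimes>\<^sub>M MY) (\<lambda>\<omega>. (X \<omega>, Y \<omega>))) (\<lambda>(x,y). f x y)"
    by (subst integral_distr[OF jm fm]) simp
  also have "\<dots> = integral\<^sup>L (distr M MX X \<Otimes>\<^sub>M distr M MY Y) (\<lambda>(x,y). f x y)" unfolding prod ..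
  also have "\<dots> = (\<integral>x. (\<integral>y. f x y \<partial>distr M MY Y) \<partial>distr M MX X)"
    using PXY.integral_fst[OF int2] by simp
  also have "\<dots> = (\<integral>\<omega>. (\<integral>y. f (X \<omega>) y \<partial>distr M MY Y) \<partial>M)"
  proof (rule integral_distr[OF rvX])
    have "case_prod f \<in> borel_measurable (MX \<Otimes>\<^sub>M distr M MY Y)"
      using fm by (simp cong: measurable_cong_sets)
    then show "(\<lambda>x. \<integral>y. f x y \<partial>distr M MY Y) \<in> borel_measurable MX"
      by (rule sigma_finite_measure.borel_measurable_lebesgue_integral[OF DYsf])
  qed
  also have "\<dots> = (\<integral>\<omega>. h (X \<omega>) \<partial>M)"
  proof (rule Bochner_Integration.integral_cong[OF refl])
    fix \<omega> assume "\<omega> \<in> space M"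
    then have Xs: "X \<omega> \<in> space MX" using measurable_space[OF rvX] by blast
    have fx: "(\<lambda>y. f (X \<omega>) y) \<in> borel_measurable MY"
      using measurable_Pair2[OF fm Xs] by simp
    show "(\<integral>y. f (X \<omega>) y \<partial>distr M MY Y) = h (X \<omega>)"
      using integral_distr[OF rvY fx] h[OF Xs] by simp
  qed
  finally show ?thesis .
qed


definition stp :: "real \<Rightarrow> ('s \<Rightarrow> real^'d) \<Rightarrow> real \<Rightarrow> real^'d \<Rightarrow> 's \<times> 's \<times> real \<Rightarrow> real^'d" where
  "stp \<gamma> \<phi> e th z = th - e *\<^sub>R (((\<phi> (fst z) - \<gamma> *\<^sub>R \<phi> (fst (snd z))) \<bullet> th) *\<^sub>R \<phi> (fst z) - snd (snd z) *\<^sub>R \<phi> (fst z))"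

lemma td_iter_Suc_stp:
  "td_iter eta \<gamma> \<phi> S S' R (Suc t) \<omega> = stp \<gamma> \<phi> (eta (Suc t)) (td_iter eta \<gamma> \<phi> S S' R t \<omega>) (S (Suc t) \<omega>, S' (Suc t) \<omega>, R (Suc t) \<omega>)"
  by (simp add: stp_def Let_def sampleA_def sampleb_def outer_mv)

lemma td_iter_cong:
  assumes "\<forall>i\<in>{1..t}. S i \<omega> = S2 i \<omega>2 \<and> S' i \<omega> = S2' i \<omega>2 \<and> R i \<omega> = R2 i \<omega>2"
  shows "td_iter eta \<gamma> \<phi> S S' R t \<omega> = td_iter eta \<gamma> \<phi> S2 S2' R2 t \<omega>2"
  using assms
proof (induction t)
  case 0 then show ?case by simp
next
  case (Suc t)
  then have "td_iter eta \<gamma> \<phi> S S' R t \<omega> = td_iter eta \<gamma> \<phi> S2 S2' R2 t \<omega>2" by auto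
  moreover have "S (Suc t) \<omega> = S2 (Suc t) \<omega>2 \<and> S' (Suc t) \<omega> = S2' (Suc t) \<omega>2 \<and> R (Suc t) \<omega> = R2 (Suc t) \<omega>2"
    using Suc.prems by auto
  ultimately show ?case by (simp add: td_iter_Suc_stp)
qed

definition Gt :: "(nat \<Rightarrow> real) \<Rightarrow> real \<Rightarrow> ('s \<Rightarrow> real^'d) \<Rightarrow> nat \<Rightarrow> (nat \<Rightarrow> 's \<times> 's \<times> real) \<Rightarrow> real^'d" where
  "Gt eta \<gamma> \<phi> t g = td_iter eta \<gamma> \<phi> (\<lambda>i _. fst (g i)) (\<lambda>i _. fst (snd (g i))) (\<lambda>i _. snd (snd (g i))) t ()"

lemma Gt_Suc: "Gt eta \<gamma> \<phi> (Suc t) g = stp \<gamma> \<phi> (eta (Suc t)) (Gt eta \<gamma> \<phi> t g) (g (Suc t))"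
  unfolding Gt_def by (subst td_iter_Suc_stp) simp

lemma td_iter_Gt:
  "td_iter eta \<gamma> \<phi> S S' R t \<omega> = Gt eta \<gamma> \<phi> t (restrict (\<lambda>i. (S i \<omega>, S' i \<omega>, R i \<omega>)) {1..t})"
  unfolding Gt_def by (rule td_iter_cong) auto

abbreviation "NN \<equiv> count_space UNIV \<Otimes>\<^sub>M count_space UNIV \<Otimes>\<^sub>M (borel :: real measure)"

lemma stp_meas[measurable]:
  fixes \<phi> :: "'s::finite \<Rightarrow> real^'d"
  shows "(\<lambda>(th, z). stp \<gamma> \<phi> e th z) \<in> borel_measurable (borel \<Otimes>\<^sub>M (NN :: ('s \<times> 's \<times> real) measure))"
  unfolding stp_def by measurable

lemma Gt_meas:
  fixes \<phi> :: "'s::finite \<Rightarrow> real^'d"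
  assumes "{1..t} \<subseteq> I"
  shows "Gt eta \<gamma> \<phi> t \<in> borel_measurable (PiM I (\<lambda>_. (NN :: ('s \<times> 's \<times> real) measure)))"
  using assms
proof (induction t)
  case 0 then show ?case by (simp add: Gt_def)
next
  case (Suc t)
  have "{1..t} \<subseteq> I" using Suc.prems by auto
  then have [measurable]: "Gt eta \<gamma> \<phi> t \<in> borel_measurable (PiM I (\<lambda>_. (NN :: ('s \<times> 's \<times> real) measure)))" by (rule Suc.IH)
  have [measurable]: "Suc t \<in> I" using Suc.prems by auto
  have "(\<lambda>g. stp \<gamma> \<phi> (eta (Suc t)) (Gt eta \<gamma> \<phi> t g) (g (Suc t))) \<in> borel_measurable (PiM I (\<lambda>_. (NN :: ('s \<times> 's \<times> real) measure)))"
    by measurable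
  then show ?case by (simp add: Gt_Suc)
qed


lemma (in prob_space) expect_SS:
  fixes X Y :: "'a \<Rightarrow> 's::finite" and h :: "'s \<Rightarrow> 's \<Rightarrow> real"
  assumes Xm[measurable]: "X \<in> measurable M (count_space UNIV)" and Ym[measurable]: "Y \<in> measurable M (count_space UNIV)"
    and dist: "\<forall>s s'. measure M {\<omega>\<in>space M. X \<omega> = s \<and> Y \<omega> = s'} = mu s * P s s'"
  shows "(\<integral>\<omega>. h (X \<omega>) (Y \<omega>) \<partial>M) = (\<Sum>s\<in>UNIV. \<Sum>s'\<in>UNIV. mu s * P s s' * h s s')"
proof -
  define A where "A = (\<lambda>s s'. {\<omega>\<in>space M. X \<omega> = s \<and> Y \<omega> = s'})"
  have As[measurable]: "A s s' \<in> sets M" for s s' unfolding A_def by measurable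
  have int1: "integrable M (\<lambda>\<omega>. h s s' * indicator (A s s') \<omega>)" for s s'
    by (intro integrable_mult_right integrable_real_indicator) (auto simp: less_top[symmetric])
  have "(\<integral>\<omega>. h (X \<omega>) (Y \<omega>) \<partial>M) = (\<integral>\<omega>. (\<Sum>s\<in>UNIV. \<Sum>s'\<in>UNIV. h s s' * indicator (A s s') \<omega>) \<partial>M)"
  proof (rule Bochner_Integration.integral_cong[OF refl])
    fix \<omega> assume w: "\<omega> \<in> space M"
    have "(\<Sum>s\<in>UNIV. \<Sum>s'\<in>UNIV. h s s' * indicator (A s s') \<omega>) = (\<Sum>s\<in>UNIV. \<Sum>s'\<in>UNIV. if s = X \<omega> \<and> s' = Y \<omega> then h s s' else 0)"
      using w by (intro sum.cong refl) (auto simp: A_def indicator_def)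
    also have "\<dots> = (\<Sum>s\<in>UNIV. if s = X \<omega> then (\<Sum>s'\<in>UNIV. if s' = Y \<omega> then h s s' else 0) else 0)"
      by (intro sum.cong refl) auto
    also have "\<dots> = h (X \<omega>) (Y \<omega>)" by simp
    finally show "h (X \<omega>) (Y \<omega>) = (\<Sum>s\<in>UNIV. \<Sum>s'\<in>UNIV. h s s' * indicator (A s s') \<omega>)" by simp
  qed
  also have "\<dots> = (\<Sum>s\<in>UNIV. (\<integral>\<omega>. (\<Sum>s'\<in>UNIV. h s s' * indicator (A s s') \<omega>) \<partial>M))"
    by (rule Bochner_Integration.integral_sum) (rule Bochner_Integration.integrable_sum[OF int1])
  also have "\<dots> = (\<Sum>s\<in>UNIV. \<Sum>s'\<in>UNIV. (\<integral>\<omega>. h s s' * indicator (A s s') \<omega> \<partial>M))"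
    by (intro sum.cong refl Bochner_Integration.integral_sum int1)
  also have "\<dots> = (\<Sum>s\<in>UNIV. \<Sum>s'\<in>UNIV. mu s * P s s' * h s s')"
  proof (intro sum.cong refl)
    fix s s'
    have "A s s' \<inter> space M = A s s'" unfolding A_def by auto
    moreover have "measure M (A s s') = mu s * P s s'" using dist unfolding A_def by blast
    ultimately show "(\<integral>\<omega>. h s s' * indicator (A s s') \<omega> \<partial>M) = mu s * P s s' * h s s'" by simp
  qed
  finally show ?thesis .
qed

lemma (in prob_space) marg_S:
  fixes X Y :: "'a \<Rightarrow> 's::finite"
  assumes Xm[measurable]: "X \<in> measurable M (count_space UNIV)" and Ym[measurable]: "Y \<in> measurable M (count_space UNIV)"
    and dist: "\<forall>s s'. measure M {\<omega>\<in>space M. X \<omega> = s \<and> Y \<omega> = s'} = mu s * P s s'"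
    and Psum: "\<forall>s. (\<Sum>s'\<in>UNIV. P s s') = 1"
  shows "measure M {\<omega>\<in>space M. X \<omega> = s} = mu s"
proof -
  have ms: "{\<omega>\<in>space M. X \<omega> = s} \<in> sets M" by measurable
  have "measure M {\<omega>\<in>space M. X \<omega> = s} = (\<integral>\<omega>. indicator {\<omega>\<in>space M. X \<omega> = s} \<omega> \<partial>M)"
    using ms by (simp add: Int_absorb2 sets.sets_into_space)
  also have "\<dots> = (\<integral>\<omega>. (\<lambda>a b. if a = s then 1 else 0) (X \<omega>) (Y \<omega>) \<partial>M)"
    by (rule Bochner_Integration.integral_cong) (auto simp: indicator_def)
  also have "\<dots> = (\<Sum>s1\<in>UNIV. \<Sum>s'\<in>UNIV. mu s1 * P s1 s' * (if s1 = s then 1 else 0))"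
    by (rule expect_SS[OF Xm Ym dist])
  also have "\<dots> = (\<Sum>s1\<in>UNIV. if s1 = s then (\<Sum>s'\<in>UNIV. mu s1 * P s1 s') else 0)"
    by (intro sum.cong refl) auto
  also have "\<dots> = (\<Sum>s'\<in>UNIV. mu s * P s s')" by simp
  also have "\<dots> = mu s * (\<Sum>s'\<in>UNIV. P s s')" by (simp add: sum_distrib_left)
  finally show ?thesis using Psum by simp
qed

lemma (in prob_space) expect_R:
  fixes X :: "'a \<Rightarrow> 's::finite" and g :: "'s \<Rightarrow> real"
  assumes Xm[measurable]: "X \<in> measurable M (count_space UNIV)" and Rint: "integrable M R"
    and cond: "\<forall>s. (\<integral>\<omega>. R \<omega> * indicator {\<omega>\<in>space M. X \<omega> = s} \<omega> \<partial>M) = r s * measure M {\<omega>\<in>space M. X \<omega> = s}"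
    and marg: "\<forall>s. measure M {\<omega>\<in>space M. X \<omega> = s} = mu s"
  shows "(\<integral>\<omega>. R \<omega> * g (X \<omega>) \<partial>M) = (\<Sum>s\<in>UNIV. mu s * r s * g s)"
proof -
  define A where "A = (\<lambda>s. {\<omega>\<in>space M. X \<omega> = s})"
  have As[measurable]: "A s \<in> sets M" for s unfolding A_def by measurable
  have "(\<integral>\<omega>. R \<omega> * g (X \<omega>) \<partial>M) = (\<integral>\<omega>. (\<Sum>s\<in>UNIV. g s * (R \<omega> * indicator (A s) \<omega>)) \<partial>M)"
  proof (rule Bochner_Integration.integral_cong[OF refl])
    fix \<omega> assume w: "\<omega> \<in> space M"
    have "(\<Sum>s\<in>UNIV. g s * (R \<omega> * indicator (A s) \<omega>)) = (\<Sum>s\<in>UNIV. if s = X \<omega> then g s * R \<omega> else 0)"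
      using w by (intro sum.cong refl) (auto simp: A_def indicator_def)
    also have "\<dots> = R \<omega> * g (X \<omega>)" by (simp add: sum.delta')
    finally show "R \<omega> * g (X \<omega>) = (\<Sum>s\<in>UNIV. g s * (R \<omega> * indicator (A s) \<omega>))" by simp
  qed
  also have "\<dots> = (\<Sum>s\<in>UNIV. g s * (\<integral>\<omega>. R \<omega> * indicator (A s) \<omega> \<partial>M))"
    using Rint by (simp add: integral_sum integrable_sum integrable_mult_right integrable_real_mult_indicator)
  also have "\<dots> = (\<Sum>s\<in>UNIV. mu s * r s * g s)"
    using cond marg by (intro sum.cong refl) (simp add: A_def)
  finally show ?thesis .
qed


definition Am :: "real \<Rightarrow> ('s \<Rightarrow> real^'d) \<Rightarrow> 's \<times> 's \<times> real \<Rightarrow> real^'d \<Rightarrow> real^'d" where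
  "Am \<gamma> \<phi> z y = ((\<phi> (fst z) - \<gamma> *\<^sub>R \<phi> (fst (snd z))) \<bullet> y) *\<^sub>R \<phi> (fst z)"

definition xi :: "real \<Rightarrow> ('s \<Rightarrow> real^'d) \<Rightarrow> real^'d \<Rightarrow> 's \<times> 's \<times> real \<Rightarrow> real^'d" where
  "xi \<gamma> \<phi> ths z = Am \<gamma> \<phi> z ths - snd (snd z) *\<^sub>R \<phi> (fst z)"

lemma stp_Am: "stp \<gamma> \<phi> e th z - ths = (th - ths) - e *\<^sub>R (Am \<gamma> \<phi> z (th - ths) + xi \<gamma> \<phi> ths z)"
  by (simp add: stp_def Am_def xi_def inner_diff_right algebra_simps)

lemma norm_Am:
  assumes "\<forall>s. norm (\<phi> s) \<le> 1" "0 \<le> \<gamma>" "\<gamma> \<le> 1"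
  shows "norm (Am \<gamma> \<phi> z y) \<le> 2 * norm y"
proof -
  have n1: "norm (\<phi> (fst z)) \<le> 1" "norm (\<phi> (fst (snd z))) \<le> 1" using assms by auto
  have "norm (\<phi> (fst z) - \<gamma> *\<^sub>R \<phi> (fst (snd z))) \<le> norm (\<phi> (fst z)) + \<gamma> * norm (\<phi> (fst (snd z)))"
    using norm_triangle_ineq4[of "\<phi> (fst z)" "\<gamma> *\<^sub>R \<phi> (fst (snd z))"] assms(2) by simp
  also have "\<dots> \<le> 2" using n1 assms(2,3) by (smt (verit) mult_left_le)
  finally have nv: "norm (\<phi> (fst z) - \<gamma> *\<^sub>R \<phi> (fst (snd z))) \<le> 2" .
  have "norm (Am \<gamma> \<phi> z y) = \<bar>(\<phi> (fst z) - \<gamma> *\<^sub>R \<phi> (fst (snd z))) \<bullet> y\<bar> * norm (\<phi> (fst z))"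
    by (simp add: Am_def)
  also have "\<dots> \<le> \<bar>(\<phi> (fst z) - \<gamma> *\<^sub>R \<phi> (fst (snd z))) \<bullet> y\<bar>"
    using n1 by (simp add: mult_left_le)
  also have "\<dots> \<le> norm (\<phi> (fst z) - \<gamma> *\<^sub>R \<phi> (fst (snd z))) * norm y" by (rule Cauchy_Schwarz_ineq2)
  also have "\<dots> \<le> 2 * norm y" using nv by (simp add: mult_right_mono)
  finally show ?thesis .
qed

lemma norm_step:
  fixes d a b :: "real^'d"
  assumes "norm a \<le> 2 * norm d"
  shows "(norm (d - e *\<^sub>R (a + b)))^2 \<le> (norm d)^2 - 2*e*(d \<bullet> a) - 2*e*(d \<bullet> b) + e^2*(8*(norm d)^2 + 2*(norm b)^2)"
proof -
  have eq: "(norm (d - e *\<^sub>R (a + b)))^2 = (norm d)^2 - 2*e*(d \<bullet> a) - 2*e*(d \<bullet> b) + e^2 * (norm (a+b))^2"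
    by (simp only: power2_norm_eq_inner) (simp add: inner_diff_left inner_diff_right inner_add_left inner_add_right
        inner_commute power2_eq_square algebra_simps)
  have "(norm (a+b))^2 \<le> (norm a + norm b)^2" by (simp add: norm_triangle_ineq power_mono)
  also have "\<dots> \<le> 2*(norm a)^2 + 2*(norm b)^2"
  proof -
    have "(norm a + norm b)^2 = 2*(norm a)^2 + 2*(norm b)^2 - (norm a - norm b)^2"
      by (simp add: power2_eq_square algebra_simps)
    moreover have "0 \<le> (norm a - norm b)^2" by simp
    ultimately show ?thesis by linarith
  qed
  also have "\<dots> \<le> 8*(norm d)^2 + 2*(norm b)^2"
  proof -
    have "(norm a)^2 \<le> (2 * norm d)^2" using assms by (intro power_mono) auto
    then show ?thesis by (simp add: power_mult_distrib)
  qed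
  finally have "e^2 * (norm (a+b))^2 \<le> e^2 * (8*(norm d)^2 + 2*(norm b)^2)" by (simp add: mult_left_mono)
  then show ?thesis using eq by simp
qed

lemma (in finite_measure) bnd_int:
  fixes f :: "'a \<Rightarrow> real"
  assumes "f \<in> borel_measurable M" "\<forall>\<omega>\<in>space M. \<bar>f \<omega>\<bar> \<le> K"
  shows "integrable M f"
  by (rule integrable_const_bound[where B=K]) (use assms in auto)


lemma td_recursion:
  fixes M :: "'w measure"
    and P :: "'s::finite \<Rightarrow> 's \<Rightarrow> real" and mu :: "'s \<Rightarrow> real"
    and r :: "'s \<Rightarrow> real" and \<phi> :: "'s \<Rightarrow> real^'d"
    and \<gamma> c :: real and eta :: "nat \<Rightarrow> real" and ths :: "real^'d"
    and S S' :: "nat \<Rightarrow> 'w \<Rightarrow> 's" and R :: "nat \<Rightarrow> 'w \<Rightarrow> real"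
  assumes gamma: "0 \<le> \<gamma>" "\<gamma> < 1"
    and Psum: "\<forall>s. (\<Sum>s'\<in>UNIV. P s s') = 1"
    and phi_bound: "\<forall>s. norm (\<phi> s) \<le> 1"
    and prob: "prob_space M"
    and S_meas: "\<forall>t. S t \<in> measurable M (count_space UNIV)"
    and S'_meas: "\<forall>t. S' t \<in> measurable M (count_space UNIV)"
    and R_meas: "\<forall>t. R t \<in> borel_measurable M"
    and iid_indep: "prob_space.indep_vars M (\<lambda>_. count_space UNIV \<Otimes>\<^sub>M count_space UNIV \<Otimes>\<^sub>M borel)
                       (\<lambda>t \<omega>. (S t \<omega>, S' t \<omega>, R t \<omega>)) {1..}"
    and iid_ident: "\<forall>t\<ge>1. distr M (count_space UNIV \<Otimes>\<^sub>M count_space UNIV \<Otimes>\<^sub>M borel) (\<lambda>\<omega>. (S t \<omega>, S' t \<omega>, R t \<omega>))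
                       = distr M (count_space UNIV \<Otimes>\<^sub>M count_space UNIV \<Otimes>\<^sub>M borel) (\<lambda>\<omega>. (S 1 \<omega>, S' 1 \<omega>, R 1 \<omega>))"
    and sample_dist: "\<forall>t\<ge>1. \<forall>s s'. measure M {\<omega>\<in>space M. S t \<omega> = s \<and> S' t \<omega> = s'} = mu s * P s s'"
    and R_range: "\<forall>t\<ge>1. \<forall>\<omega>\<in>space M. 0 \<le> R t \<omega> \<and> R t \<omega> \<le> 1"
    and R_cond_mean: "\<forall>t\<ge>1. \<forall>s. (\<integral>\<omega>. R t \<omega> * indicator {\<omega>\<in>space M. S t \<omega> = s} \<omega> \<partial>M)
                         = r s * measure M {\<omega>\<in>space M. S t \<omega> = s}"
    and Ath: "tdA mu P \<gamma> \<phi> *v ths = tdb mu r \<phi>"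
    and cA: "\<forall>x. c * (norm x)^2 \<le> x \<bullet> (tdA mu P \<gamma> \<phi> *v x)"
    and eta_nn: "\<forall>k. 0 \<le> eta k"
  shows "(\<integral>\<omega>. (norm (td_iter eta \<gamma> \<phi> S S' R (Suc n) \<omega> - ths))\<^sup>2 \<partial>M)
     \<le> (1 - 2*c*eta (Suc n) + 8*(eta (Suc n))^2) * (\<integral>\<omega>. (norm (td_iter eta \<gamma> \<phi> S S' R n \<omega> - ths))\<^sup>2 \<partial>M)
       + 2 * (\<integral>\<omega>. (norm (xi \<gamma> \<phi> ths (S 1 \<omega>, S' 1 \<omega>, R 1 \<omega>)))\<^sup>2 \<partial>M) * (eta (Suc n))^2"
proof -
  interpret prob_space M by (rule prob)
  have Sm[measurable]: "S t \<in> measurable M (count_space UNIV)" for t using S_meas by blast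
  have S'm[measurable]: "S' t \<in> measurable M (count_space UNIV)" for t using S'_meas by blast
  have Rm[measurable]: "R t \<in> borel_measurable M" for t using R_meas by blast
  define Z where "Z = (\<lambda>t \<omega>. (S t \<omega>, S' t \<omega>, R t \<omega>))"
  have Zm[measurable]: "Z t \<in> measurable M NN" for t unfolding Z_def by measurable
  define \<theta> where "\<theta> = td_iter eta \<gamma> \<phi> S S' R"
  have \<theta>_Suc: "\<theta> (Suc t) \<omega> = stp \<gamma> \<phi> (eta (Suc t)) (\<theta> t \<omega>) (Z (Suc t) \<omega>)" for t \<omega>
    unfolding \<theta>_def Z_def by (rule td_iter_Suc_stp)
  have \<theta>m[measurable]: "\<theta> t \<in> borel_measurable M" for t
  proof (induction t)
    case 0 then show ?case by (simp add: \<theta>_def)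
  next
    case (Suc t)
    note [measurable] = Suc.IH
    have "(\<lambda>\<omega>. stp \<gamma> \<phi> (eta (Suc t)) (\<theta> t \<omega>) (Z (Suc t) \<omega>)) \<in> borel_measurable M" by measurable
    then show ?case by (simp add: \<theta>_Suc)
  qed
  have \<theta>b: "\<exists>B. \<forall>\<omega>\<in>space M. norm (\<theta> t \<omega>) \<le> B" for t
  proof (induction t)
    case 0 then show ?case by (auto simp: \<theta>_def)
  next
    case (Suc t)
    then obtain B where B: "\<forall>\<omega>\<in>space M. norm (\<theta> t \<omega>) \<le> B" by blast
    show ?case
    proof (intro exI ballI)
      fix \<omega> assume w: "\<omega> \<in> space M"
      define z where "z = Z (Suc t) \<omega>"
      have rr: "\<bar>snd (snd z)\<bar> \<le> 1" using R_range w by (auto simp: z_def Z_def)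
      have nphi: "norm (\<phi> (fst z)) \<le> 1" using phi_bound by blast
      have "norm (\<theta> (Suc t) \<omega>) = norm (\<theta> t \<omega> - eta (Suc t) *\<^sub>R (Am \<gamma> \<phi> z (\<theta> t \<omega>) - snd (snd z) *\<^sub>R \<phi> (fst z)))"
        by (simp add: \<theta>_Suc stp_def Am_def z_def)
      also have "\<dots> \<le> norm (\<theta> t \<omega>) + eta (Suc t) * (norm (Am \<gamma> \<phi> z (\<theta> t \<omega>)) + norm (snd (snd z) *\<^sub>R \<phi> (fst z)))"
        using eta_nn norm_triangle_ineq4 norm_triangle_ineq4[of "Am \<gamma> \<phi> z (\<theta> t \<omega>)"]
        by (smt (verit, best) mult_left_mono norm_scaleR abs_of_nonneg)
      also have "\<dots> \<le> B + eta (Suc t) * (2 * B + 1)"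
      proof -
        have "norm (Am \<gamma> \<phi> z (\<theta> t \<omega>)) \<le> 2 * B"
          using norm_Am[OF phi_bound gamma(1), of z "\<theta> t \<omega>"] gamma B w by auto
        moreover have "norm (snd (snd z) *\<^sub>R \<phi> (fst z)) \<le> 1"
          using rr nphi by (simp add: mult_le_one)
        ultimately show ?thesis using B w eta_nn
          by (smt (verit, best) mult_left_mono)
      qed
      finally show "norm (\<theta> (Suc t) \<omega>) \<le> B + eta (Suc t) * (2 * B + 1)" .
    qed
  qed
  define e where "e = eta (Suc n)"
  have e0: "0 \<le> e" using eta_nn by (simp add: e_def)
  define D where "D = (\<lambda>\<omega>. \<theta> n \<omega> - ths)"
  define a where "a = (\<lambda>\<omega>. Am \<gamma> \<phi> (Z (Suc n) \<omega>) (D \<omega>))"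
  define \<xi> where "\<xi> = (\<lambda>\<omega>. xi \<gamma> \<phi> ths (Z (Suc n) \<omega>))"
  have Dm[measurable]: "D \<in> borel_measurable M" unfolding D_def by measurable
  have am[measurable]: "a \<in> borel_measurable M" unfolding a_def Am_def by measurable
  have \<xi>m[measurable]: "\<xi> \<in> borel_measurable M" unfolding \<xi>_def xi_def Am_def by measurable
  obtain B where B: "\<forall>\<omega>\<in>space M. norm (\<theta> n \<omega>) \<le> B" using \<theta>b by blast
  have DB: "norm (D \<omega>) \<le> B + norm ths" if "\<omega> \<in> space M" for \<omega>
    using B that norm_triangle_ineq4[of "\<theta> n \<omega>" ths] by (auto simp: D_def)
  have aB: "norm (a \<omega>) \<le> 2 * norm (D \<omega>)" for \<omega>
    unfolding a_def using norm_Am[OF phi_bound gamma(1)] gamma by auto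
  have \<xi>B: "norm (\<xi> \<omega>) \<le> 2 * norm ths + 1" if "\<omega> \<in> space M" for \<omega>
  proof -
    have rr: "\<bar>R (Suc n) \<omega>\<bar> \<le> 1" using R_range that by auto
    have "norm (\<xi> \<omega>) \<le> norm (Am \<gamma> \<phi> (Z (Suc n) \<omega>) ths) + norm (R (Suc n) \<omega> *\<^sub>R \<phi> (S (Suc n) \<omega>))"
      unfolding \<xi>_def xi_def Z_def using norm_triangle_ineq4 by (simp del: norm_scaleR)
    also have "\<dots> \<le> 2 * norm ths + 1"
      using norm_Am[OF phi_bound gamma(1), of "Z (Suc n) \<omega>" ths] gamma rr phi_bound
      by (smt (verit) mult_le_one norm_ge_zero norm_scaleR)
    finally show ?thesis .
  qed
  define KD where "KD = B + norm ths"
  have KD: "\<forall>\<omega>\<in>space M. norm (D \<omega>) \<le> KD" using DB by (simp add: KD_def)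
  define K\<xi> where "K\<xi> = 2 * norm ths + 1"
  have K\<xi>: "\<forall>\<omega>\<in>space M. norm (\<xi> \<omega>) \<le> K\<xi>" using \<xi>B by (simp add: K\<xi>_def)
  have KDnn: "0 \<le> KD" using KD by (metis norm_ge_zero order.trans prob_space.not_empty prob ex_in_conv)
  have int_DD: "integrable M (\<lambda>\<omega>. (norm (D \<omega>))^2)"
    by (rule bnd_int[where K="KD^2"]) (auto intro!: power_mono simp: KD)
  have int_\<xi>\<xi>: "integrable M (\<lambda>\<omega>. (norm (\<xi> \<omega>))^2)"
    by (rule bnd_int[where K="K\<xi>^2"]) (auto intro!: power_mono simp: K\<xi>)
  have int_Da: "integrable M (\<lambda>\<omega>. D \<omega> \<bullet> a \<omega>)"
  proof (rule bnd_int[where K="KD * (2*KD)"])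
    show "\<forall>\<omega>\<in>space M. \<bar>D \<omega> \<bullet> a \<omega>\<bar> \<le> KD * (2*KD)"
    proof
      fix \<omega> assume w: "\<omega> \<in> space M"
      have "\<bar>D \<omega> \<bullet> a \<omega>\<bar> \<le> norm (D \<omega>) * norm (a \<omega>)" by (rule Cauchy_Schwarz_ineq2)
      also have "\<dots> \<le> KD * (2*KD)"
        using KD w aB[of \<omega>] KDnn by (intro mult_mono) (auto intro: order.trans)
      finally show "\<bar>D \<omega> \<bullet> a \<omega>\<bar> \<le> KD * (2*KD)" .
    qed
  qed simp
  have int_D\<xi>: "integrable M (\<lambda>\<omega>. D \<omega> \<bullet> \<xi> \<omega>)"
  proof (rule bnd_int[where K="KD * K\<xi>"])
    show "\<forall>\<omega>\<in>space M. \<bar>D \<omega> \<bullet> \<xi> \<omega>\<bar> \<le> KD * K\<xi>"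
    proof
      fix \<omega> assume w: "\<omega> \<in> space M"
      have "\<bar>D \<omega> \<bullet> \<xi> \<omega>\<bar> \<le> norm (D \<omega>) * norm (\<xi> \<omega>)" by (rule Cauchy_Schwarz_ineq2)
      also have "\<dots> \<le> KD * K\<xi>"
        using KD K\<xi> w KDnn by (intro mult_mono) auto
      finally show "\<bar>D \<omega> \<bullet> \<xi> \<omega>\<bar> \<le> KD * K\<xi>" .
    qed
  qed simp
  have step_eq: "\<theta> (Suc n) \<omega> - ths = D \<omega> - e *\<^sub>R (a \<omega> + \<xi> \<omega>)" for \<omega>
    unfolding \<theta>_Suc D_def a_def \<xi>_def e_def by (rule stp_Am)
  define u where "u = (\<lambda>t. \<integral>\<omega>. (norm (\<theta> t \<omega> - ths))\<^sup>2 \<partial>M)"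
  have un: "u n = (\<integral>\<omega>. (norm (D \<omega>))^2 \<partial>M)" by (simp add: u_def D_def)
  define MX where "MX = PiM {1..n} (\<lambda>_. (NN :: ('s \<times> 's \<times> real) measure))"
  define MY where "MY = PiM {Suc n} (\<lambda>_. (NN :: ('s \<times> 's \<times> real) measure))"
  define past where "past = (\<lambda>\<omega>. restrict (\<lambda>i. Z i \<omega>) {1..n})"
  define cur where "cur = (\<lambda>\<omega>. restrict (\<lambda>i. Z i \<omega>) {Suc n})"
  have ind: "indep_var MX past MY cur"
  proof -
    define K where "K = (\<lambda>b::bool. if b then {1..n} else {Suc n})"
    have iv: "indep_vars (\<lambda>_. NN) Z {1..}" using iid_indep by (simp add: Z_def)
    have "indep_vars (\<lambda>j. PiM (K j) (\<lambda>_. NN)) (\<lambda>j \<omega>. restrict (\<lambda>i. Z i \<omega>) (K j)) UNIV"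
    proof (rule indep_vars_restrict[OF iv])
      show "K j \<subseteq> {1..}" for j by (auto simp: K_def)
      show "disjoint_family_on K UNIV" by (auto simp: disjoint_family_on_def K_def)
    qed
    moreover have "(\<lambda>j. PiM (K j) (\<lambda>_. NN)) = case_bool MX MY"
      by (rule ext) (simp add: K_def MX_def MY_def split: bool.split)
    moreover have "(\<lambda>j \<omega>. restrict (\<lambda>i. Z i \<omega>) (K j)) = case_bool past cur"
      by (rule ext) (simp add: K_def past_def cur_def split: bool.split)
    ultimately show ?thesis unfolding indep_var_def by simp
  qed
  have Gm[measurable]: "Gt eta \<gamma> \<phi> n \<in> borel_measurable MX" unfolding MX_def by (rule Gt_meas) simp
  have ym[measurable]: "(\<lambda>y. y (Suc n)) \<in> measurable MY NN" unfolding MY_def by (rule measurable_component_singleton) simp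
  have \<theta>past: "\<theta> n \<omega> = Gt eta \<gamma> \<phi> n (past \<omega>)" for \<omega>
    unfolding \<theta>_def past_def Z_def by (rule td_iter_Gt)
  have curZ: "cur \<omega> (Suc n) = Z (Suc n) \<omega>" for \<omega> by (simp add: cur_def)
  have sd: "\<forall>s s'. measure M {\<omega>\<in>space M. S (Suc n) \<omega> = s \<and> S' (Suc n) \<omega> = s'} = mu s * P s s'"
    using sample_dist by auto
  have Am_inner: "y \<bullet> Am \<gamma> \<phi> z y' = ((\<phi> (fst z) - \<gamma> *\<^sub>R \<phi> (fst (snd z))) \<bullet> y') * (\<phi> (fst z) \<bullet> y)" for y y' z
    by (simp add: Am_def inner_commute)
  have EAm: "(\<integral>\<omega>. y \<bullet> Am \<gamma> \<phi> (Z (Suc n) \<omega>) y' \<partial>M) = y \<bullet> (tdA mu P \<gamma> \<phi> *v y')" for y y'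
  proof -
    have "(\<integral>\<omega>. y \<bullet> Am \<gamma> \<phi> (Z (Suc n) \<omega>) y' \<partial>M) =
        (\<integral>\<omega>. (\<lambda>s s'. ((\<phi> s - \<gamma> *\<^sub>R \<phi> s') \<bullet> y') * (\<phi> s \<bullet> y)) (S (Suc n) \<omega>) (S' (Suc n) \<omega>) \<partial>M)"
      by (simp add: Am_inner Z_def)
    also have "\<dots> = (\<Sum>s\<in>UNIV. \<Sum>s'\<in>UNIV. mu s * P s s' * (((\<phi> s - \<gamma> *\<^sub>R \<phi> s') \<bullet> y') * (\<phi> s \<bullet> y)))"
      by (rule expect_SS[OF Sm S'm sd])
    also have "\<dots> = y \<bullet> (tdA mu P \<gamma> \<phi> *v y')" by (simp add: A_form mult_ac)
    finally show ?thesis .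
  qed
  have Amat_m[measurable]: "(\<lambda>x. tdA mu P \<gamma> \<phi> *v x) \<in> borel_measurable borel"
    by (rule borel_measurable_continuous_onI[OF matrix_vector_mult_linear_continuous_on])
  obtain KA where KA: "\<And>x. norm (tdA mu P \<gamma> \<phi> *v x) \<le> norm x * KA" and KApos: "KA > 0"
    using bounded_linear.pos_bounded[OF matrix_vector_mul_bounded_linear] by blast
  have I1: "(\<integral>\<omega>. D \<omega> \<bullet> a \<omega> \<partial>M) \<ge> c * u n"
  proof -
    define f1 where "f1 = (\<lambda>g y. (Gt eta \<gamma> \<phi> n g - ths) \<bullet> Am \<gamma> \<phi> (y (Suc n)) (Gt eta \<gamma> \<phi> n g - ths))"
    have fD: "D \<omega> \<bullet> a \<omega> = f1 (past \<omega>) (cur \<omega>)" for \<omega>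
      by (simp add: f1_def D_def a_def \<theta>past curZ)
    have "(\<integral>\<omega>. D \<omega> \<bullet> a \<omega> \<partial>M) = (\<integral>\<omega>. f1 (past \<omega>) (cur \<omega>) \<partial>M)" by (simp add: fD)
    also have "\<dots> = (\<integral>\<omega>. (\<lambda>g. (Gt eta \<gamma> \<phi> n g - ths) \<bullet> (tdA mu P \<gamma> \<phi> *v (Gt eta \<gamma> \<phi> n g - ths))) (past \<omega>) \<partial>M)"
    proof (rule indep_expect[OF ind])
      show "(\<lambda>(x, y). f1 x y) \<in> borel_measurable (MX \<Otimes>\<^sub>M MY)"
        unfolding f1_def Am_def by measurable
      show "integrable M (\<lambda>\<omega>. f1 (past \<omega>) (cur \<omega>))" using int_Da by (simp add: fD[symmetric])
      show "(\<integral>\<omega>. f1 x (cur \<omega>) \<partial>M) = (Gt eta \<gamma> \<phi> n x - ths) \<bullet> (tdA mu P \<gamma> \<phi> *v (Gt eta \<gamma> \<phi> n x - ths))" for x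
        unfolding f1_def curZ by (rule EAm)
    qed
    also have "\<dots> = (\<integral>\<omega>. D \<omega> \<bullet> (tdA mu P \<gamma> \<phi> *v D \<omega>) \<partial>M)" by (simp add: D_def \<theta>past)
    also have "\<dots> \<ge> (\<integral>\<omega>. c * (norm (D \<omega>))^2 \<partial>M)"
    proof (rule integral_mono)
      show "integrable M (\<lambda>\<omega>. c * (norm (D \<omega>))^2)" using int_DD by simp
      show "c * (norm (D \<omega>))^2 \<le> D \<omega> \<bullet> (tdA mu P \<gamma> \<phi> *v D \<omega>)" for \<omega> using cA by blast
      show "integrable M (\<lambda>\<omega>. D \<omega> \<bullet> (tdA mu P \<gamma> \<phi> *v D \<omega>))"
      proof (rule bnd_int[where K="KD * (KD * KA)"])
        show "\<forall>\<omega>\<in>space M. \<bar>D \<omega> \<bullet> (tdA mu P \<gamma> \<phi> *v D \<omega>)\<bar> \<le> KD * (KD * KA)"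
        proof
          fix \<omega> assume w: "\<omega> \<in> space M"
          have "\<bar>D \<omega> \<bullet> (tdA mu P \<gamma> \<phi> *v D \<omega>)\<bar> \<le> norm (D \<omega>) * norm (tdA mu P \<gamma> \<phi> *v D \<omega>)"
            by (rule Cauchy_Schwarz_ineq2)
          also have "\<dots> \<le> KD * (KD * KA)"
            using KD w KA[of "D \<omega>"] KDnn KApos
            by (intro mult_mono) (auto intro: order.trans mult_right_mono)
          finally show "\<bar>D \<omega> \<bullet> (tdA mu P \<gamma> \<phi> *v D \<omega>)\<bar> \<le> KD * (KD * KA)" .
        qed
      qed measurable
    qed
    also have "(\<integral>\<omega>. c * (norm (D \<omega>))^2 \<partial>M) = c * u n" by (simp add: un)
    finally show ?thesis .
  qed
  have Rint: "integrable M (R (Suc n))"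
    by (rule bnd_int[where K=1]) (use R_range in auto)
  have marg: "\<forall>s. measure M {\<omega>\<in>space M. S (Suc n) \<omega> = s} = mu s"
    using marg_S[OF Sm S'm sd Psum] by blast
  have rc: "\<forall>s. (\<integral>\<omega>. R (Suc n) \<omega> * indicator {\<omega>\<in>space M. S (Suc n) \<omega> = s} \<omega> \<partial>M)
                         = r s * measure M {\<omega>\<in>space M. S (Suc n) \<omega> = s}"
    using R_cond_mean by auto
  have Exi: "(\<integral>\<omega>. y \<bullet> xi \<gamma> \<phi> ths (Z (Suc n) \<omega>) \<partial>M) = 0" for y
  proof -
    have i1: "integrable M (\<lambda>\<omega>. y \<bullet> Am \<gamma> \<phi> (Z (Suc n) \<omega>) ths)"
    proof (rule bnd_int[where K="norm y * (2 * norm ths)"])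
      show "\<forall>\<omega>\<in>space M. \<bar>y \<bullet> Am \<gamma> \<phi> (Z (Suc n) \<omega>) ths\<bar> \<le> norm y * (2 * norm ths)"
        using Cauchy_Schwarz_ineq2 norm_Am[OF phi_bound gamma(1)] gamma
        by (smt (verit, best) mult_left_mono norm_ge_zero)
    qed (unfold Am_def, measurable)
    have i2: "integrable M (\<lambda>\<omega>. R (Suc n) \<omega> * (y \<bullet> \<phi> (S (Suc n) \<omega>)))"
    proof (rule bnd_int[where K="norm y"])
      show "\<forall>\<omega>\<in>space M. \<bar>R (Suc n) \<omega> * (y \<bullet> \<phi> (S (Suc n) \<omega>))\<bar> \<le> norm y"
      proof
        fix \<omega> assume w: "\<omega> \<in> space M"
        have "\<bar>y \<bullet> \<phi> (S (Suc n) \<omega>)\<bar> \<le> norm y * norm (\<phi> (S (Suc n) \<omega>))" by (rule Cauchy_Schwarz_ineq2)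
        also have "\<dots> \<le> norm y" using phi_bound by (simp add: mult_left_le)
        finally have "\<bar>y \<bullet> \<phi> (S (Suc n) \<omega>)\<bar> \<le> norm y" .
        moreover have "\<bar>R (Suc n) \<omega>\<bar> \<le> 1" using R_range w by auto
        ultimately show "\<bar>R (Suc n) \<omega> * (y \<bullet> \<phi> (S (Suc n) \<omega>))\<bar> \<le> norm y"
          by (simp add: abs_mult mult_le_one) (metis abs_ge_zero mult_left_le order.trans mult.commute)
      qed
    qed measurable
    have "(\<integral>\<omega>. y \<bullet> xi \<gamma> \<phi> ths (Z (Suc n) \<omega>) \<partial>M) =
       (\<integral>\<omega>. y \<bullet> Am \<gamma> \<phi> (Z (Suc n) \<omega>) ths - R (Suc n) \<omega> * (y \<bullet> \<phi> (S (Suc n) \<omega>)) \<partial>M)"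
      by (simp add: xi_def Z_def inner_diff_right)
    also have "\<dots> = (\<integral>\<omega>. y \<bullet> Am \<gamma> \<phi> (Z (Suc n) \<omega>) ths \<partial>M) - (\<integral>\<omega>. R (Suc n) \<omega> * (y \<bullet> \<phi> (S (Suc n) \<omega>)) \<partial>M)"
      using i1 i2 by (rule Bochner_Integration.integral_diff)
    also have "(\<integral>\<omega>. R (Suc n) \<omega> * (y \<bullet> \<phi> (S (Suc n) \<omega>)) \<partial>M) = (\<Sum>s\<in>UNIV. mu s * r s * (y \<bullet> \<phi> s))"
      by (rule expect_R[OF Sm Rint rc marg])
    also have "\<dots> = y \<bullet> tdb mu r \<phi>" by (simp add: tdb_def inner_sum_right mult_ac)
    also have "(\<integral>\<omega>. y \<bullet> Am \<gamma> \<phi> (Z (Suc n) \<omega>) ths \<partial>M) = y \<bullet> tdb mu r \<phi>"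
      using EAm Ath by simp
    finally show ?thesis by simp
  qed
  have I2: "(\<integral>\<omega>. D \<omega> \<bullet> \<xi> \<omega> \<partial>M) = 0"
  proof -
    define f2 where "f2 = (\<lambda>g y. (Gt eta \<gamma> \<phi> n g - ths) \<bullet> xi \<gamma> \<phi> ths (y (Suc n)))"
    have fD: "D \<omega> \<bullet> \<xi> \<omega> = f2 (past \<omega>) (cur \<omega>)" for \<omega>
      by (simp add: f2_def D_def \<xi>_def \<theta>past curZ)
    have "(\<integral>\<omega>. D \<omega> \<bullet> \<xi> \<omega> \<partial>M) = (\<integral>\<omega>. f2 (past \<omega>) (cur \<omega>) \<partial>M)" by (simp add: fD)
    also have "\<dots> = (\<integral>\<omega>. (\<lambda>g. 0::real) (past \<omega>) \<partial>M)"
    proof (rule indep_expect[OF ind])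
      show "(\<lambda>(x, y). f2 x y) \<in> borel_measurable (MX \<Otimes>\<^sub>M MY)"
        unfolding f2_def xi_def Am_def by measurable
      show "integrable M (\<lambda>\<omega>. f2 (past \<omega>) (cur \<omega>))" using int_D\<xi> by (simp add: fD[symmetric])
      show "(\<integral>\<omega>. f2 x (cur \<omega>) \<partial>M) = 0" for x
        unfolding f2_def curZ by (rule Exi)
    qed
    finally show ?thesis by simp
  qed
  have I3: "(\<integral>\<omega>. (norm (\<xi> \<omega>))^2 \<partial>M) = (\<integral>\<omega>. (norm (xi \<gamma> \<phi> ths (S 1 \<omega>, S' 1 \<omega>, R 1 \<omega>)))\<^sup>2 \<partial>M)"
  proof -
    have gm: "(\<lambda>z. (norm (xi \<gamma> \<phi> ths z))^2) \<in> borel_measurable NN"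
      unfolding xi_def Am_def by measurable
    have "(\<integral>\<omega>. (norm (\<xi> \<omega>))^2 \<partial>M) = integral\<^sup>L (distr M NN (Z (Suc n))) (\<lambda>z. (norm (xi \<gamma> \<phi> ths z))^2)"
      by (simp add: integral_distr[OF Zm gm] \<xi>_def)
    also have "\<dots> = integral\<^sup>L (distr M NN (Z 1)) (\<lambda>z. (norm (xi \<gamma> \<phi> ths z))^2)"
    proof -
      have "distr M NN (Z (Suc n)) = distr M NN (Z 1)"
        unfolding Z_def by (rule iid_ident[rule_format]) simp
      then show ?thesis by (rule arg_cong)
    qed
    also have "\<dots> = (\<integral>\<omega>. (norm (xi \<gamma> \<phi> ths (S 1 \<omega>, S' 1 \<omega>, R 1 \<omega>)))\<^sup>2 \<partial>M)"
      using integral_distr[OF Zm[of 1] gm] by (simp add: Z_def)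
    finally show ?thesis .
  qed
  have "u (Suc n) \<le> (\<integral>\<omega>. (norm (D \<omega>))^2 - 2*e*(D \<omega> \<bullet> a \<omega>) - 2*e*(D \<omega> \<bullet> \<xi> \<omega>)
          + e^2*(8*(norm (D \<omega>))^2 + 2*(norm (\<xi> \<omega>))^2) \<partial>M)"
    unfolding u_def step_eq
  proof (rule integral_mono)
    show "integrable M (\<lambda>\<omega>. (norm (D \<omega> - e *\<^sub>R (a \<omega> + \<xi> \<omega>)))\<^sup>2)"
    proof (rule bnd_int[where K="(KD + e * (2*KD + K\<xi>))^2"])
      show "\<forall>\<omega>\<in>space M. \<bar>(norm (D \<omega> - e *\<^sub>R (a \<omega> + \<xi> \<omega>)))\<^sup>2\<bar> \<le> (KD + e * (2*KD + K\<xi>))^2"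
      proof
        fix \<omega> assume w: "\<omega> \<in> space M"
        have "norm (D \<omega> - e *\<^sub>R (a \<omega> + \<xi> \<omega>)) \<le> norm (D \<omega>) + e * (norm (a \<omega>) + norm (\<xi> \<omega>))"
          using e0 norm_triangle_ineq4[of "D \<omega>"] norm_triangle_ineq[of "a \<omega>" "\<xi> \<omega>"]
          by (smt (verit) mult_left_mono norm_scaleR abs_of_nonneg)
        also have "\<dots> \<le> KD + e * (2*KD + K\<xi>)"
          using KD K\<xi> w aB[of \<omega>] e0 KDnn by (intro add_mono mult_left_mono) (auto intro: order.trans)
        finally show "\<bar>(norm (D \<omega> - e *\<^sub>R (a \<omega> + \<xi> \<omega>)))\<^sup>2\<bar> \<le> (KD + e * (2*KD + K\<xi>))^2"
          by (simp add: power_mono)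
      qed
    qed simp
    show "integrable M (\<lambda>\<omega>. (norm (D \<omega>))^2 - 2*e*(D \<omega> \<bullet> a \<omega>) - 2*e*(D \<omega> \<bullet> \<xi> \<omega>)
          + e^2*(8*(norm (D \<omega>))^2 + 2*(norm (\<xi> \<omega>))^2))"
      using int_DD int_Da int_D\<xi> int_\<xi>\<xi> by auto
    show "(norm (D \<omega> - e *\<^sub>R (a \<omega> + \<xi> \<omega>)))\<^sup>2 \<le> (norm (D \<omega>))^2 - 2*e*(D \<omega> \<bullet> a \<omega>) - 2*e*(D \<omega> \<bullet> \<xi> \<omega>)
          + e^2*(8*(norm (D \<omega>))^2 + 2*(norm (\<xi> \<omega>))^2)" for \<omega>
      by (rule norm_step[OF aB])
  qed
  also have "\<dots> = u n - 2*e*(\<integral>\<omega>. D \<omega> \<bullet> a \<omega> \<partial>M) - 2*e*(\<integral>\<omega>. D \<omega> \<bullet> \<xi> \<omega> \<partial>M)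
       + e^2*(8*u n + 2*(\<integral>\<omega>. (norm (\<xi> \<omega>))^2 \<partial>M))"
    using int_DD int_Da int_D\<xi> int_\<xi>\<xi> by (simp add: un)
  also have "\<dots> \<le> u n - 2*e*(c * u n) + e^2*(8*u n + 2*(\<integral>\<omega>. (norm (\<xi> \<omega>))^2 \<partial>M))"
    using I1 I2 e0 by (simp add: mult_left_mono)
  finally show ?thesis
    unfolding I3 by (simp add: u_def \<theta>_def e_def algebra_simps)
qed

lemma trace_outer: "trace (outer u u) = (norm u)^2" for u :: "real^'d"
  by (simp add: trace_def outer_def power2_norm_eq_inner inner_vec_def)

lemma outer_cont: "continuous_on UNIV (\<lambda>u::real^'d. outer u u)"
  unfolding outer_def by (intro continuous_intros)

lemma norm_outer_le: "norm (outer u u) \<le> real (CARD('d))^2 * (norm u)^2" for u :: "real^'d"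
proof -
  have "norm (outer u u) \<le> (\<Sum>i\<in>UNIV. norm (outer u u $ i))" by (simp add: norm_vec_def L2_set_le_sum)
  also have "\<dots> \<le> (\<Sum>i\<in>(UNIV::'d set). \<Sum>j\<in>(UNIV::'d set). \<bar>outer u u $ i $ j\<bar>)"
    by (intro sum_mono norm_le_l1_cart)
  also have "\<dots> \<le> (\<Sum>i\<in>(UNIV::'d set). \<Sum>j\<in>(UNIV::'d set). (norm u)^2)"
  proof (intro sum_mono)
    fix i j :: 'd
    have "\<bar>outer u u $ i $ j\<bar> = \<bar>u $ i\<bar> * \<bar>u $ j\<bar>" by (simp add: outer_def abs_mult)
    also have "\<dots> \<le> norm u * norm u"
      by (intro mult_mono component_le_norm_cart) auto
    finally show "\<bar>outer u u $ i $ j\<bar> \<le> (norm u)^2" by (simp add: power2_eq_square)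
  qed
  also have "\<dots> = real (CARD('d))^2 * (norm u)^2" by (simp add: power2_eq_square)
  finally show ?thesis .
qed

theorem mainTheorem19:
  fixes M :: "'w measure"
    and P :: "'s::finite \<Rightarrow> 's \<Rightarrow> real" and mu :: "'s \<Rightarrow> real"
    and r :: "'s \<Rightarrow> real" and \<phi> :: "'s \<Rightarrow> real^'d"
    and \<gamma> \<alpha> \<eta>0 :: real
    and S S' :: "nat \<Rightarrow> 'w \<Rightarrow> 's" and R :: "nat \<Rightarrow> 'w \<Rightarrow> real"
  assumes gamma: "0 \<le> \<gamma>" "\<gamma> < 1"
    and P_kernel: "\<forall>s s'. 0 \<le> P s s'" "\<forall>s. (\<Sum>s'\<in>UNIV. P s s') = 1"
    and mu_stat: "stationary P mu"
    and mu_unique: "\<forall>nu. stationary P nu \<longrightarrow> nu = mu"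
    and r_range: "\<forall>s. 0 \<le> r s \<and> r s \<le> 1"
    and phi_bound: "\<forall>s. norm (\<phi> s) \<le> 1"
    and lambda0_pos: "lambda_min (tdSigma mu \<phi>) > 0"
    and prob: "prob_space M"
    and S_meas: "\<forall>t. S t \<in> measurable M (count_space UNIV)"
    and S'_meas: "\<forall>t. S' t \<in> measurable M (count_space UNIV)"
    and R_meas: "\<forall>t. R t \<in> borel_measurable M"
    and iid_indep: "prob_space.indep_vars M (\<lambda>_. count_space UNIV \<Otimes>\<^sub>M count_space UNIV \<Otimes>\<^sub>M borel)
                       (\<lambda>t \<omega>. (S t \<omega>, S' t \<omega>, R t \<omega>)) {1..}"
    and iid_ident: "\<forall>t\<ge>1. distr M (count_space UNIV \<Otimes>\<^sub>M count_space UNIV \<Otimes>\<^sub>M borel) (\<lambda>\<omega>. (S t \<omega>, S' t \<omega>, R t \<omega>))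
                       = distr M (count_space UNIV \<Otimes>\<^sub>M count_space UNIV \<Otimes>\<^sub>M borel) (\<lambda>\<omega>. (S 1 \<omega>, S' 1 \<omega>, R 1 \<omega>))"
    and sample_dist: "\<forall>t\<ge>1. \<forall>s s'. measure M {\<omega>\<in>space M. S t \<omega> = s \<and> S' t \<omega> = s'} = mu s * P s s'"
    and R_range: "\<forall>t\<ge>1. \<forall>\<omega>\<in>space M. 0 \<le> R t \<omega> \<and> R t \<omega> \<le> 1"
    and R_cond_mean: "\<forall>t\<ge>1. \<forall>s. (\<integral>\<omega>. R t \<omega> * indicator {\<omega>\<in>space M. S t \<omega> = s} \<omega> \<partial>M)
                         = r s * measure M {\<omega>\<in>space M. S t \<omega> = s}"
    and alpha: "1/2 < \<alpha>" "\<alpha> < 1"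
    and eta0: "0 < \<eta>0" "\<eta>0 \<le> 1/2"
  shows "\<exists>C. \<forall>t::nat. t \<ge> 1 \<longrightarrow>
    (let \<theta>star = matrix_inv (tdA mu P \<gamma> \<phi>) *v tdb mu r \<phi>;
         \<Gamma> = (\<integral>\<omega>. outer (sampleA \<gamma> \<phi> (S 1 \<omega>) (S' 1 \<omega>) *v \<theta>star - sampleb \<phi> (S 1 \<omega>) (R 1 \<omega>))
                         (sampleA \<gamma> \<phi> (S 1 \<omega>) (S' 1 \<omega>) *v \<theta>star - sampleb \<phi> (S 1 \<omega>) (R 1 \<omega>)) \<partial>M);
         lam0 = lambda_min (tdSigma mu \<phi>)
     in (\<integral>\<omega>. (norm (td_iter (\<lambda>k. \<eta>0 * real k powr (-\<alpha>)) \<gamma> \<phi> S S' R t \<omega> - \<theta>star))\<^sup>2 \<partial>M)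
        \<le> 3 * \<eta>0 * trace \<Gamma> / ((1 - \<gamma>) * lam0) * real t powr (-\<alpha>) + C / real t)"
proof -
  interpret prob_space M by (rule prob)
  define A where "A = tdA mu P \<gamma> \<phi>"
  define ths where "ths = matrix_inv A *v tdb mu r \<phi>"
  define lam0 where "lam0 = lambda_min (tdSigma mu \<phi>)"
  define c where "c = (1 - \<gamma>) * lam0"
  have cpos: "c > 0" using gamma lambda0_pos by (simp add: c_def lam0_def)
  have symS: "\<And>x y. x \<bullet> (tdSigma mu \<phi> *v y) = y \<bullet> (tdSigma mu \<phi> *v x)"
    by (simp add: Sigma_form mult_ac)
  have cA: "\<forall>x. c * (norm x)^2 \<le> x \<bullet> (A *v x)"
  proof
    fix x :: "real^'d"
    have "lam0 * (norm x)^2 \<le> x \<bullet> (tdSigma mu \<phi> *v x)" unfolding lam0_def by (rule min_eig_le[OF symS])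
    then have "(1-\<gamma>) * (lam0 * (norm x)^2) \<le> (1-\<gamma>) * (x \<bullet> (tdSigma mu \<phi> *v x))"
      using gamma by (intro mult_left_mono) auto
    also have "\<dots> \<le> x \<bullet> (A *v x)" unfolding A_def by (rule A_ge_Sigma[OF gamma(1) P_kernel mu_stat])
    finally show "c * (norm x)^2 \<le> x \<bullet> (A *v x)" by (simp add: c_def mult_ac)
  qed
  have ker: "\<forall>x. A *v x = 0 \<longrightarrow> x = 0"
  proof (intro allI impI)
    fix x :: "real^'d" assume "A *v x = 0"
    then have "c * (norm x)^2 \<le> 0" using cA by (metis inner_zero_right)
    then show "x = 0" using cpos by (simp add: mult_le_0_iff)
  qed
  then have "invertible A" unfolding invertible_left_inverse by (simp add: matrix_left_invertible_ker)
  then have "\<exists>A'. A ** A' = mat 1 \<and> A' ** A = mat 1" by (simp add: invertible_def)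
  then have "A ** matrix_inv A = mat 1" unfolding matrix_inv_def by (rule someI_ex[THEN conjunct1])
  then have Ath: "A *v ths = tdb mu r \<phi>"
    by (simp add: ths_def matrix_vector_mul_assoc)
  define eta where "eta = (\<lambda>k::nat. \<eta>0 * real k powr (-\<alpha>))"
  have eta_nn: "\<forall>k. 0 \<le> eta k" using eta0 by (simp add: eta_def)
  define u where "u = (\<lambda>t. \<integral>\<omega>. (norm (td_iter eta \<gamma> \<phi> S S' R t \<omega> - ths))\<^sup>2 \<partial>M)"
  define G where "G = (\<integral>\<omega>. (norm (xi \<gamma> \<phi> ths (S 1 \<omega>, S' 1 \<omega>, R 1 \<omega>)))\<^sup>2 \<partial>M)"
  have rec: "\<forall>n. u (Suc n) \<le> (1 - 2*c*(\<eta>0 * real (Suc n) powr (-\<alpha>)) + 8*(\<eta>0 * real (Suc n) powr (-\<alpha>))^2) * u n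
                  + 2*G*(\<eta>0 * real (Suc n) powr (-\<alpha>))^2"
  proof
    fix n
    have "u (Suc n) \<le> (1 - 2*c*eta (Suc n) + 8*(eta (Suc n))^2) * u n + 2 * G * (eta (Suc n))^2"
      unfolding u_def G_def
      by (rule td_recursion[OF gamma P_kernel(2) phi_bound prob S_meas S'_meas R_meas iid_indep iid_ident
            sample_dist R_range R_cond_mean Ath[unfolded A_def] cA[unfolded A_def] eta_nn])
    then show "u (Suc n) \<le> (1 - 2*c*(\<eta>0 * real (Suc n) powr (-\<alpha>)) + 8*(\<eta>0 * real (Suc n) powr (-\<alpha>))^2) * u n
                  + 2*G*(\<eta>0 * real (Suc n) powr (-\<alpha>))^2" by (simp add: eta_def)
  qed
  have Gnn: "G \<ge> 0" unfolding G_def by simp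
  have u_nn: "\<forall>n. u n \<ge> 0" unfolding u_def by simp
  obtain D where D: "\<forall>t::nat. t \<ge> 1 \<longrightarrow> u t \<le> 3*\<eta>0*G/c * real t powr (-\<alpha>) + D / real t"
    using seq_bound[OF alpha cpos Gnn eta0(1) u_nn rec] by blast
  define v where "v = (\<lambda>\<omega>. sampleA \<gamma> \<phi> (S 1 \<omega>) (S' 1 \<omega>) *v ths - sampleb \<phi> (S 1 \<omega>) (R 1 \<omega>))"
  have v_xi: "v \<omega> = xi \<gamma> \<phi> ths (S 1 \<omega>, S' 1 \<omega>, R 1 \<omega>)" for \<omega>
    by (simp add: v_def xi_def Am_def sampleA_def sampleb_def outer_mv)
  have Sm[measurable]: "S t \<in> measurable M (count_space UNIV)" for t using S_meas by blast
  have S'm[measurable]: "S' t \<in> measurable M (count_space UNIV)" for t using S'_meas by blast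
  have Rm[measurable]: "R t \<in> borel_measurable M" for t using R_meas by blast
  have vm[measurable]: "v \<in> borel_measurable M" unfolding v_xi[abs_def] xi_def Am_def by measurable
  have om[measurable]: "(\<lambda>u::real^'d. outer u u) \<in> borel_measurable borel"
    by (rule borel_measurable_continuous_onI[OF outer_cont])
  have vb: "norm (v \<omega>) \<le> 2 * norm ths + 1" if "\<omega> \<in> space M" for \<omega>
  proof -
    have rr: "\<bar>R 1 \<omega>\<bar> \<le> 1" using R_range that by auto
    have "norm (v \<omega>) \<le> norm (Am \<gamma> \<phi> (S 1 \<omega>, S' 1 \<omega>, R 1 \<omega>) ths) + norm (R 1 \<omega> *\<^sub>R \<phi> (S 1 \<omega>))"
      unfolding v_xi xi_def using norm_triangle_ineq4 by (simp del: norm_scaleR)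
    also have "\<dots> \<le> 2 * norm ths + 1"
      using norm_Am[OF phi_bound gamma(1), of "(S 1 \<omega>, S' 1 \<omega>, R 1 \<omega>)" ths] gamma rr phi_bound
      by (smt (verit) mult_le_one norm_ge_zero norm_scaleR)
    finally show ?thesis .
  qed
  have int_o: "integrable M (\<lambda>\<omega>. outer (v \<omega>) (v \<omega>))"
  proof (rule integrable_const_bound[where B="real (CARD('d))^2 * (2 * norm ths + 1)^2"])
    show "AE \<omega> in M. norm (outer (v \<omega>) (v \<omega>)) \<le> real (CARD('d))^2 * (2 * norm ths + 1)^2"
    proof (rule AE_I2)
      fix \<omega> assume w: "\<omega> \<in> space M"
      have "norm (outer (v \<omega>) (v \<omega>)) \<le> real (CARD('d))^2 * (norm (v \<omega>))^2" by (rule norm_outer_le)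
      also have "\<dots> \<le> real (CARD('d))^2 * (2 * norm ths + 1)^2"
        using vb[OF w] by (intro mult_left_mono power_mono) auto
      finally show "norm (outer (v \<omega>) (v \<omega>)) \<le> real (CARD('d))^2 * (2 * norm ths + 1)^2" .
    qed
  qed measurable
  have blt: "bounded_linear (\<lambda>X::real^'d^'d. trace X)"
  proof -
    have "bounded_linear (\<lambda>X::real^'d^'d. \<Sum>i\<in>UNIV. X $ i $ i)"
      by (intro bounded_linear_sum bounded_linear_compose[OF bounded_linear_vec_nth] bounded_linear_vec_nth)
    then show ?thesis by (simp add: trace_def)
  qed
  have trG: "trace (\<integral>\<omega>. outer (v \<omega>) (v \<omega>) \<partial>M) = G"
  proof -
    have "trace (\<integral>\<omega>. outer (v \<omega>) (v \<omega>) \<partial>M) = (\<integral>\<omega>. trace (outer (v \<omega>) (v \<omega>)) \<partial>M)"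
      by (rule integral_bounded_linear[OF blt int_o, symmetric])
    also have "\<dots> = G" by (simp add: trace_outer G_def v_xi)
    finally show ?thesis .
  qed
  show ?thesis
  proof (intro exI allI impI)
    fix t :: nat assume t: "t \<ge> 1"
    have "u t \<le> 3*\<eta>0*G/c * real t powr (-\<alpha>) + D / real t" using D t by blast
    then show "let \<theta>star = matrix_inv (tdA mu P \<gamma> \<phi>) *v tdb mu r \<phi>;
         \<Gamma> = (\<integral>\<omega>. outer (sampleA \<gamma> \<phi> (S 1 \<omega>) (S' 1 \<omega>) *v \<theta>star - sampleb \<phi> (S 1 \<omega>) (R 1 \<omega>))
                         (sampleA \<gamma> \<phi> (S 1 \<omega>) (S' 1 \<omega>) *v \<theta>star - sampleb \<phi> (S 1 \<omega>) (R 1 \<omega>)) \<partial>M);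
         lam0 = lambda_min (tdSigma mu \<phi>)
     in (\<integral>\<omega>. (norm (td_iter (\<lambda>k. \<eta>0 * real k powr (-\<alpha>)) \<gamma> \<phi> S S' R t \<omega> - \<theta>star))\<^sup>2 \<partial>M)
        \<le> 3 * \<eta>0 * trace \<Gamma> / ((1 - \<gamma>) * lam0) * real t powr (-\<alpha>) + D / real t"
      unfolding Let_def using trG
      by (simp add: u_def eta_def ths_def A_def v_def c_def lam0_def)
  qed
qed

end
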